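(* Let $\mathcal{H}$ be a real Hilbert space, let $\ell\geq 0$, and let $f\colon \mathcal{H}\to\mathbb{R}$ be a convex and lower semicontinuous function. Then $f$ is $\ell$-Lipschitz if and only if $$\Vert x\Vert-\ell\leq \Vert \operatorname{prox}_f(x+y)-y\Vert \quad \text{for all } x,y\in\mathcal{H}.$$
   Context: For a proper convex lower semicontinuous $f$, $\operatorname{prox}_f(x)=\operatorname{argmin}_{u\in\mathcal{H}}\{f(u)+\tfrac12\Vert x-u\Vert^2\}$ (the minimizer exists and is unique). *)

theory Defs
  imports "HOL-Analysis.Analysis"
begin

definition lsc :: "('a::topological_space \<Rightarrow> real) \<Rightarrow> bool" where
  "lsc f \<longleftrightarrow> (\<forall>x c. c < f x \<longrightarrow> eventually (\<lambda>y. c < f y) (nhds x))"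

definition prox :: "('a::real_inner \<Rightarrow> real) \<Rightarrow> 'a \<Rightarrow> 'a" where
  "prox f x = (THE u. \<forall>v. f u + (1/2) * (norm (x - u))^2 \<le> f v + (1/2) * (norm (x - v))^2)"

end

theory Submission
  imports Defs
begin


lemma nsq: "(norm (x - y))^2 = (norm x)^2 - 2 * inner x y + (norm (y::'a::real_inner))^2"
  by (simp add: power2_norm_eq_inner inner_diff_left inner_diff_right inner_commute[of y x])

lemma lsc_lower_bound:
  fixes f :: "'a::real_normed_vector \<Rightarrow> real"
  assumes cvx: "convex_on UNIV f" and lsc: "lsc f"
  shows "\<exists>A B. B \<ge> 0 \<and> (\<forall>u. A - B * norm u \<le> f u)"
proof -
  have "eventually (\<lambda>y. f 0 - 1 < f y) (nhds 0)" using lsc unfolding lsc_def by simp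
  then obtain d where d: "d > 0" "\<forall>y. dist y 0 < d \<longrightarrow> f 0 - 1 < f y"
    by (auto simp: eventually_nhds_metric)
  have "f 0 - 1 - (2/d) * norm u \<le> f u" for u
  proof (cases "norm u < d")
    case True
    then have "f 0 - 1 < f u" using d by auto
    moreover have "(2/d) * norm u \<ge> 0" using d by simp
    ultimately show ?thesis by linarith
  next
    case False
    define t where "t = d / (2 * norm u)"
    have nu: "norm u > 0" using False d by linarith
    have t: "0 < t" "t \<le> 1" using nu False d unfolding t_def by (auto simp: field_simps)
    have "norm (t *\<^sub>R u) = d/2" using nu t d unfolding t_def by simp
    hence "f 0 - 1 < f (t *\<^sub>R u)" using d by auto
    moreover have "f ((1 - t) *\<^sub>R 0 + t *\<^sub>R u) \<le> (1 - t) * f 0 + t * f u"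
      using convex_onD[OF cvx, of t 0 u] t by simp
    ultimately have "t * (f u - f 0) > -1" by (simp add: algebra_simps)
    hence "f u - f 0 > -1 / t" using t by (simp add: field_simps)
    moreover have "1 / t = (2/d) * norm u" unfolding t_def using d nu by simp
    ultimately have "f u - f 0 > - ((2/d) * norm u)" by simp
    then show ?thesis by linarith
  qed
  moreover have "2/d \<ge> 0" using d by simp
  ultimately show ?thesis by blast
qed

lemma prox_eq:
  fixes f :: "'a::real_inner \<Rightarrow> real"
  assumes sg: "\<And>v. f q + inner g (v - q) \<le> f v"
  shows "prox f (q + g) = q"
  unfolding prox_def
proof (rule the_equality)
  have key: "f q + (1/2) * (norm (q + g - q))^2 + (1/2) * (norm (v - q))^2 \<le> f v + (1/2) * (norm (q + g - v))^2" for v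
  proof -
    have "(norm (q + g - v))^2 = (norm g)^2 - 2 * inner g (v - q) + (norm (v - q))^2"
    proof -
      have "q + g - v = g - (v - q)" by (simp add: algebra_simps)
      then show ?thesis by (simp only: nsq)
    qed
    note N = this
    have R:  "\<And>fq I fv N X Y::real. fq + I \<le> fv \<Longrightarrow> N = X - 2*I + Y \<Longrightarrow> fq + (1/2)*X + (1/2)*Y \<le> fv + (1/2)*N"
      by linarith
    show ?thesis unfolding add_diff_cancel_left' by (rule R[OF sg[of v] N])
  qed
  show "\<forall>v. f q + 1 / 2 * (norm (q + g - q))\<^sup>2 \<le> f v + 1 / 2 * (norm (q + g - v))\<^sup>2"
  proof
    fix v show "f q + 1 / 2 * (norm (q + g - q))\<^sup>2 \<le> f v + 1 / 2 * (norm (q + g - v))\<^sup>2"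
      using key[of v] zero_le_power2[of "norm (v - q)"] by linarith
  qed
  fix u assume u: "\<forall>v. f u + 1 / 2 * (norm (q + g - u))\<^sup>2 \<le> f v + 1 / 2 * (norm (q + g - v))\<^sup>2"
  have "f u + 1 / 2 * (norm (q + g - u))\<^sup>2 \<le> f q + 1 / 2 * (norm (q + g - q))\<^sup>2" using u by blast
  with key[of u] have "(norm (u - q))^2 \<le> 0" by linarith
  then show "u = q" by simp
qed

lemma le_zero_from_small:
  fixes X K :: real
  assumes "K \<ge> 0" "\<And>t. 0 < t \<Longrightarrow> t < 1 \<Longrightarrow> X \<le> t * K"
  shows "X \<le> 0"
proof (rule ccontr)
  assume "\<not> X \<le> 0"
  hence X: "X > 0" by simp
  define t where "t = min (1/2) (X / (2 * (K + 1)))"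
  have t: "0 < t" "t < 1" using X assms(1) unfolding t_def by auto
  have "t * K \<le> (X / (2 * (K + 1))) * K" using assms(1) unfolding t_def by (intro mult_right_mono) auto
  also have "\<dots> < X"
  proof -
    have "0 \<le> K * X" using X assms(1) by simp
    then have h: "0 < K * X + X * 2" using X by linarith
    then show ?thesis using X assms(1) by (simp add: field_simps)
  qed
  finally show False using assms(2)[OF t] by simp
qed

lemma min_subgrad:
  fixes h :: "'a::real_inner \<Rightarrow> real"
  assumes cvx: "convex_on UNIV h"
    and mn: "\<And>v. h q + (1/2) * (norm (a - q))^2 \<le> h v + (1/2) * (norm (a - v))^2"
  shows "h q + inner (a - q) (v - q) \<le> h v"
proof -
  have "h q + inner (a - q) (v - q) - h v \<le> 0"
  proof (rule le_zero_from_small[of "(1/2) * (norm (v - q))^2"])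
    fix t :: real assume t: "0 < t" "t < 1"
    let ?w = "(1 - t) *\<^sub>R q + t *\<^sub>R v"
    have c: "h ?w \<le> (1 - t) * h q + t * h v" using convex_onD[OF cvx, of t q v] t by simp
    have eqw: "a - ?w = (a - q) - t *\<^sub>R (v - q)" by (simp add: algebra_simps)
    have n: "(norm (a - ?w))^2 = (norm (a - q))^2 - 2 * t * inner (a - q) (v - q) + t^2 * (norm (v - q))^2"
      unfolding eqw using nsq[of "a - q" "t *\<^sub>R (v - q)"] t by (simp add: power_mult_distrib)
    have m: "h q + (1/2) * (norm (a - q))^2 \<le> h ?w + (1/2) * (norm (a - ?w))^2" by (rule mn)
    have e: "t * (h q + inner (a - q) (v - q) - h v) - t * (t * ((1/2) * (norm (v - q))^2))
       = (h q + (1/2) * (norm (a - q))^2) - ((1 - t) * h q + t * h v + (1/2) * (norm (a - ?w))^2)"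
      unfolding n by (simp add: algebra_simps power2_eq_square)
    have "t * (h q + inner (a - q) (v - q) - h v) \<le> t * (t * ((1/2) * (norm (v - q))^2))"
      using e m c by linarith
    then show "h q + inner (a - q) (v - q) - h v \<le> t * ((1/2) * (norm (v - q))^2)"
      using t by simp
  qed simp
  then show ?thesis by simp
qed



lemma nsq_add: "(norm (x + y))^2 = (norm x)^2 + 2 * inner x y + (norm (y::'a::real_inner))^2"
  by (simp add: power2_norm_eq_inner inner_add_left inner_add_right inner_commute[of y x])

lemma exists_min:
  fixes h :: "'a::{real_inner, complete_space} \<Rightarrow> real"
  assumes cvx: "convex_on UNIV h" and lsc: "lsc h"
  shows "\<exists>q. \<forall>v. h q + (1/2) * (norm (a - q))^2 \<le> h v + (1/2) * (norm (a - v))^2"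
proof -
  define G where "G u = h u + (1/2) * (norm (a - u))^2" for u
  obtain A B where AB: "B \<ge> 0" "\<forall>u. A - B * norm u \<le> h u"
    using lsc_lower_bound[OF cvx lsc] by blast
  have lb: "A - B * norm a - B^2/2 \<le> G u" for u
  proof -
    define r where "r = norm (a - u)"
    have "norm (a - (a - u)) \<le> norm a + norm (a - u)" by (rule norm_triangle_ineq4)
    hence "norm u \<le> norm a + r" unfolding r_def by simp
    hence "B * norm u \<le> B * norm a + B * r" using AB(1)
      by (metis distrib_left mult_left_mono)
    moreover have "B * r \<le> B^2/2 + r^2/2"
    proof -
      have "0 \<le> (B - r)^2" by simp
      thus ?thesis by (simp add: power2_eq_square algebra_simps)
    qed
    moreover have "A - B * norm u \<le> h u" using AB by blast
    ultimately show ?thesis unfolding G_def r_def by linarith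
  qed
  define m where "m = Inf (range G)"
  have bdd: "bdd_below (range G)" using lb by (intro bdd_belowI2) 
  have mle: "m \<le> G u" for u unfolding m_def by (rule cInf_lower[OF _ bdd]) simp
  have "\<exists>x. G x < m + inverse (real (Suc n))" for n
  proof -
    have "Inf (range G) < m + inverse (real (Suc n))" unfolding m_def by simp
    then show ?thesis using cInf_lessD[of "range G"] by auto
  qed
  then obtain u where u: "\<And>n. G (u n) < m + inverse (real (Suc n))" by metis
  have par: "(norm (x - y))^2 \<le> 4 * (G x + G y - 2 * m)" for x y
  proof -
    define w where "w = (1 - 1/2) *\<^sub>R x + (1/2) *\<^sub>R y"
    have hw: "h w \<le> (1 - 1/2) * h x + (1/2) * h y"
      unfolding w_def by (rule convex_onD[OF cvx]) auto
    define p where "p = a - x"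
    define q where "q = a - y"
    have a2: "a = (1/2) *\<^sub>R a + (1/2) *\<^sub>R a" by (simp flip: scaleR_add_left)
    have aw: "a - w = (1/2) *\<^sub>R (p + q)" unfolding w_def p_def q_def
      by (subst a2) (simp add: algebra_simps)
    have xy: "x - y = q - p" unfolding p_def q_def by simp
    have n1: "(norm (a - w))^2 = (1/4) * ((norm p)^2 + 2 * inner p q + (norm q)^2)"
      unfolding aw using nsq_add[of p q] by (simp add: power_mult_distrib power2_eq_square)
    have n2: "(norm (x - y))^2 = (norm q)^2 - 2 * inner p q + (norm p)^2"
      unfolding xy using nsq[of q p] by (simp add: inner_commute[of q p])
    have "m \<le> G w" by (rule mle)
    have R: "\<And>m hw hx hy P Q I N (D::real). m \<le> hw + (1/2) * N \<Longrightarrow> hw \<le> (1 - 1/2) * hx + (1/2) * hy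
       \<Longrightarrow> N = (1/4) * (P + 2 * I + Q) \<Longrightarrow> D = Q - 2 * I + P
       \<Longrightarrow> D \<le> 4 * (hx + (1/2) * P + (hy + (1/2) * Q) - 2 * m)" by (simp add: algebra_simps)
    have gw: "m \<le> h w + (1/2) * (norm (a - w))^2" using \<open>m \<le> G w\<close> unfolding G_def .
    show ?thesis unfolding G_def p_def[symmetric] q_def[symmetric]
      using R[OF gw hw n1 n2] by simp
  qed
  have "Cauchy u"
    unfolding Cauchy_def
  proof (intro allI impI)
    fix e :: real assume e: "e > 0"
    obtain N where N: "inverse (real (Suc N)) < e^2 / 8" using reals_Archimedean[of "e^2/8"] e by auto
    show "\<exists>M. \<forall>i\<ge>M. \<forall>j\<ge>M. dist (u i) (u j) < e"
    proof (intro exI allI impI)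
      fix i j assume ij: "N \<le> i" "N \<le> j"
      have ii: "inverse (real (Suc i)) \<le> inverse (real (Suc N))" using ij by (simp add: field_simps)
      have jj: "inverse (real (Suc j)) \<le> inverse (real (Suc N))" using ij by (simp add: field_simps)
      have "(dist (u i) (u j))^2 \<le> 4 * (G (u i) + G (u j) - 2 * m)" unfolding dist_norm by (rule par)
      also have "\<dots> < e^2"
      proof -
        have R2: "4 * (a + b - 2 * m) < E" if "a < m + i'" "b < m + j'" "i' \<le> n'" "j' \<le> n'" "n' < E / 8"
          for a b m i' j' n' E :: real using that by (simp add: field_simps)
        show ?thesis by (rule R2[OF u[of i] u[of j] ii jj N])
      qed
      finally show "dist (u i) (u j) < e" using e by (simp add: power_less_imp_less_base)
    qed
  qed
  then obtain q where lim: "u \<longlonglongrightarrow> q" using Cauchy_convergent_iff convergent_def by blast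
  have "G q \<le> m"
  proof (rule ccontr)
    assume "\<not> G q \<le> m"
    define \<epsilon> where "\<epsilon> = (G q - m) / 3"
    have ep: "\<epsilon> > 0" using \<open>\<not> G q \<le> m\<close> unfolding \<epsilon>_def by simp
    have "eventually (\<lambda>y. h q - \<epsilon> < h y) (nhds q)" using lsc ep unfolding lsc_def by simp
    hence ev1: "eventually (\<lambda>n. h q - \<epsilon> < h (u n)) sequentially"
      using lim unfolding filterlim_iff by blast
    have "(\<lambda>n. (1/2) * (norm (a - u n))^2) \<longlonglongrightarrow> (1/2) * (norm (a - q))^2"
      by (intro tendsto_intros lim)
    hence ev2: "eventually (\<lambda>n. (1/2) * (norm (a - q))^2 - \<epsilon> < (1/2) * (norm (a - u n))^2) sequentially"
      using ep by (intro order_tendstoD) auto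
    obtain N where N: "inverse (real (Suc N)) < \<epsilon>" using reals_Archimedean[OF ep] by auto
    have ev3: "eventually (\<lambda>n. inverse (real (Suc n)) < \<epsilon>) sequentially"
      unfolding eventually_sequentially
    proof (intro exI[of _ N] allI impI)
      fix n assume "N \<le> n"
      hence "inverse (real (Suc n)) \<le> inverse (real (Suc N))" by (simp add: field_simps)
      thus "inverse (real (Suc n)) < \<epsilon>" using N by linarith
    qed
    obtain n where "h q - \<epsilon> < h (u n)" "(1/2) * (norm (a - q))^2 - \<epsilon> < (1/2) * (norm (a - u n))^2"
        "inverse (real (Suc n)) < \<epsilon>"
      using eventually_happens'[OF _ eventually_conj[OF ev1 eventually_conj[OF ev2 ev3]]] by auto
    moreover have gq: "h q + (1/2) * (norm (a - q))^2 = m + 3 * \<epsilon>" unfolding \<epsilon>_def G_def[symmetric] by (simp add: field_simps)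
    ultimately show False using u[of n] unfolding G_def by linarith
  qed
  then have "\<forall>v. G q \<le> G v" using mle by (meson order_trans)
  then show ?thesis unfolding G_def by blast
qed



theorem proposition4:
  fixes f :: "'a::{real_inner, complete_space} \<Rightarrow> real" and l :: real
  assumes "0 \<le> l" and "convex_on UNIV f" and "lsc f"
  shows "l-lipschitz_on UNIV f \<longleftrightarrow>
         (\<forall>x y. norm x - l \<le> norm (prox f (x + y) - y))"
proof
  assume L: "l-lipschitz_on UNIV f"
  show "\<forall>x y. norm x - l \<le> norm (prox f (x + y) - y)"
  proof (intro allI)
    fix x y :: 'a
    obtain q where q: "\<forall>v. f q + 1/2 * (norm ((x + y) - q))^2 \<le> f v + 1/2 * (norm ((x + y) - v))^2"
      using exists_min[OF assms(2) assms(3)] by blast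
    define g where "g = (x + y) - q"
    have sg: "f q + inner g (v - q) \<le> f v" for v
      unfolding g_def by (rule min_subgrad[OF assms(2)]) (use q in blast)
    have pq: "prox f (x + y) = q" using prox_eq[of f q g, OF sg] unfolding g_def by simp
    have ng: "norm g \<le> l"
    proof -
      have "f q + inner g g \<le> f (q + g)" using sg[of "q + g"] by simp
      moreover have "dist (f (q + g)) (f q) \<le> l * dist (q + g) q" by (rule lipschitz_onD[OF L]) auto
      hence "f (q + g) - f q \<le> l * norm g" by (simp add: dist_real_def dist_norm)
      ultimately have "norm g * norm g \<le> l * norm g" by (simp add: power2_norm_eq_inner[symmetric] power2_eq_square)
      then show ?thesis
        using assms(1) by (cases "norm g = 0") (auto simp: mult_le_cancel_right_pos)
    qed
    have "x = g + (q - y)" unfolding g_def by simp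
    hence "norm x \<le> norm g + norm (q - y)" by (metis norm_triangle_ineq)
    then show "norm x - l \<le> norm (prox f (x + y) - y)" using ng pq by simp
  qed
next
  assume R: "\<forall>x y. norm x - l \<le> norm (prox f (x + y) - y)"
  have H: "norm (z - prox f z) \<le> l" for z
  proof -
    define d where "d = z - prox f z"
    have "norm (2 *\<^sub>R d) - l \<le> norm (prox f (2 *\<^sub>R d + (z - 2 *\<^sub>R d)) - (z - 2 *\<^sub>R d))" using R by blast
    moreover have "prox f (2 *\<^sub>R d + (z - 2 *\<^sub>R d)) - (z - 2 *\<^sub>R d) = d"
    proof -
      have "2 *\<^sub>R d + (z - 2 *\<^sub>R d) = z" by simp
      moreover have "prox f z - (z - 2 *\<^sub>R d) = d" unfolding d_def by (simp add: scaleR_2 algebra_simps)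
      ultimately show ?thesis by simp
    qed
    ultimately have "2 * norm d - l \<le> norm d" by simp
    then show ?thesis unfolding d_def by simp
  qed
  have key: "f a - f b \<le> l * norm (a - b)" for a b
  proof (rule field_le_epsilon)
    fix e :: real assume e: "0 < e"
    define \<epsilon> where "\<epsilon> = e / 2"
    have ep: "\<epsilon> > 0" using e unfolding \<epsilon>_def by simp
    have "eventually (\<lambda>y. f a - \<epsilon> < f y) (nhds a)" using assms(3) ep unfolding lsc_def by simp
    then obtain \<delta> where dl: "\<delta> > 0" "\<forall>y. dist y a < \<delta> \<longrightarrow> f a - \<epsilon> < f y"
      by (auto simp: eventually_nhds_metric)
    define lam where "lam = min (\<delta> / (l + 1)) (\<epsilon> / (l^2 + 1))"
    have p2: "0 < l^2 + 1" using zero_le_power2[of l] by linarith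
    have lp: "lam > 0" unfolding lam_def using dl ep assms(1) p2 by (auto intro!: divide_pos_pos)
    have l1: "lam * (l + 1) \<le> \<delta>"
    proof -
      have "lam \<le> \<delta> / (l + 1)" unfolding lam_def by simp
      thus ?thesis using assms(1) by (simp add: field_simps)
    qed
    have l2: "lam * (l^2 + 1) \<le> \<epsilon>"
    proof -
      have "lam \<le> \<epsilon> / (l^2 + 1)" unfolding lam_def by simp
      thus ?thesis using p2 by (simp add: field_simps)
    qed
    have cv: "convex_on UNIV (\<lambda>v. lam * f v)" using lp assms(2) by (intro convex_on_cmul) auto
    have ls: "lsc (\<lambda>v. lam * f v)"
      unfolding lsc_def
    proof (intro allI impI)
      fix x c assume "c < lam * f x"
      hence "c / lam < f x" using lp by (simp add: field_simps)
      hence "eventually (\<lambda>y. c / lam < f y) (nhds x)" using assms(3) unfolding lsc_def by blast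
      then show "eventually (\<lambda>y. c < lam * f y) (nhds x)"
        by (rule eventually_mono) (use lp in \<open>simp add: field_simps\<close>)
    qed
    obtain q where q: "\<forall>v. lam * f q + 1/2 * (norm (a - q))^2 \<le> lam * f v + 1/2 * (norm (a - v))^2"
      using exists_min[OF cv ls] by blast
    define g where "g = (1 / lam) *\<^sub>R (a - q)"
    have sg: "f q + inner g (v - q) \<le> f v" for v
    proof -
      have s0: "lam * f q + inner (a - q) (v - q) \<le> lam * f v"
        by (rule min_subgrad[OF cv]) (use q in blast)
      have "lam * (f q + inner g (v - q)) = lam * f q + inner (a - q) (v - q)"
        unfolding g_def using lp by (simp add: algebra_simps)
      with s0 have "lam * (f q + inner g (v - q)) \<le> lam * f v" by simp
      then show ?thesis using lp by simp
    qed
    have "prox f (q + g) = q" by (rule prox_eq[OF sg])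
    with H[of "q + g"] have ng: "norm g \<le> l" by simp
    have aq: "a - q = lam *\<^sub>R g" unfolding g_def using lp by simp
    have naq: "norm (a - q) \<le> lam * l" unfolding aq using lp ng by (simp add: mult_left_mono)
    have "lam * l < \<delta>" using l1 lp by (simp add: algebra_simps)
    hence "dist q a < \<delta>" using naq by (simp add: dist_norm norm_minus_commute)
    hence fq: "f a - \<epsilon> < f q" using dl by blast
    have "- inner g (b - q) \<le> norm g * norm (b - q)"
      using norm_cauchy_schwarz[of "- g" "b - q"] by simp
    also have "\<dots> \<le> l * norm (b - q)" using ng by (simp add: mult_right_mono)
    also have "\<dots> \<le> l * (norm (a - b) + lam * l)"
    proof -
      have "b - q = (b - a) + (a - q)" by simp
      hence "norm (b - q) \<le> norm (b - a) + norm (a - q)" by (metis norm_triangle_ineq)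
      hence nbq: "norm (b - q) \<le> norm (a - b) + lam * l" using naq by (simp add: norm_minus_commute)
      show ?thesis by (rule mult_left_mono[OF nbq assms(1)])
    qed
    also have "\<dots> \<le> l * norm (a - b) + \<epsilon>"
    proof -
      have "l * (lam * l) \<le> lam * (l^2 + 1)" using lp by (simp add: power2_eq_square algebra_simps)
      thus ?thesis using l2 by (simp add: distrib_left)
    qed
    finally have "- inner g (b - q) \<le> l * norm (a - b) + \<epsilon>" .
    with sg[of b] fq show "f a - f b \<le> l * norm (a - b) + e" unfolding \<epsilon>_def by linarith
  qed
  show "l-lipschitz_on UNIV f"
    unfolding lipschitz_on_def
  proof (intro conjI ballI)
    show "0 \<le> l" by (rule assms(1))
    fix x y :: 'a
    have "f x - f y \<le> l * dist x y" using key[of x y] by (simp add: dist_norm)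
    moreover have "f y - f x \<le> l * dist x y" using key[of y x] by (simp add: dist_norm norm_minus_commute)
    ultimately show "dist (f x) (f y) \<le> l * dist x y" by (simp add: dist_real_def)
  qed
qed

end
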